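(* Let $(X,d)$ be a compact metric space and $f:X\to X$ continuous. Then the relation $\sim$ on $CR(f)$ is an equivalence relation, the set $R=\{(x,y)\in CR(f)^2: x\sim y\}$ is closed in $CR(f)^2$, and $(f\times f)(R)\subset R$.
   Context: For $\delta>0$, a finite sequence $(x_i)_{i=0}^k$ ($k\ge1$) is a $\delta$-chain of $f$ if $d(f(x_i),x_{i+1})\le\delta$ for $0\le i\le k-1$; it is a $\delta$-cycle if moreover $x_0=x_k$. $CR(f)$ is the set of chain recurrent points: $x\in CR(f)$ iff for every $\delta>0$ there is a $\delta$-cycle $(x_i)_{i=0}^k$ with $x_0=x_k=x$. For $x,y\in CR(f)$, $x\sim y$ iff for every $\delta>0$ there are integers $m>0$, $N>0$ such that for every integer $n\ge N$ there are $\delta$-chains $(x_i)_{i=0}^{mn},(y_i)_{i=0}^{mn}$ of $f$ consisting of points of $CR(f)$ with $x_0=y_{mn}=x$ and $x_{mn}=y_0=y$. *)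

theory Defs
  imports "HOL-Analysis.Analysis"
begin

definition delta_chain :: "'a::metric_space set \<Rightarrow> ('a \<Rightarrow> 'a) \<Rightarrow> real \<Rightarrow> (nat \<Rightarrow> 'a) \<Rightarrow> nat \<Rightarrow> bool" where
  "delta_chain X f \<delta> c k \<longleftrightarrow>
     (\<forall>i\<le>k. c i \<in> X) \<and> (\<forall>i<k. dist (f (c i)) (c (Suc i)) \<le> \<delta>)"

definition CR :: "'a::metric_space set \<Rightarrow> ('a \<Rightarrow> 'a) \<Rightarrow> 'a set" where
  "CR X f = {x \<in> X. \<forall>\<delta>>0. \<exists>k\<ge>1. \<exists>c. delta_chain X f \<delta> c k \<and> c 0 = x \<and> c k = x}"

definition cr_rel :: "'a::metric_space set \<Rightarrow> ('a \<Rightarrow> 'a) \<Rightarrow> 'a \<Rightarrow> 'a \<Rightarrow> bool" where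
  "cr_rel X f x y \<longleftrightarrow> x \<in> CR X f \<and> y \<in> CR X f \<and>
     (\<forall>\<delta>>0. \<exists>m>0. \<exists>N>0. \<forall>n\<ge>N. \<exists>xs ys.
        delta_chain X f \<delta> xs (m * n) \<and> delta_chain X f \<delta> ys (m * n) \<and>
        (\<forall>i\<le>m * n. xs i \<in> CR X f \<and> ys i \<in> CR X f) \<and>
        xs 0 = x \<and> ys (m * n) = x \<and> xs (m * n) = y \<and> ys 0 = y)"

end

theory Submission
  imports Defs
begin


definition chainCR where
 "chainCR X f d c k a b \<longleftrightarrow> delta_chain X f d c k \<and> (\<forall>i\<le>k. c i \<in> CR X f) \<and> c 0 = a \<and> c k = b"

lemma cr_rel_alt:
  "cr_rel X f x y \<longleftrightarrow> x \<in> CR X f \<and> y \<in> CR X f \<and>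
     (\<forall>\<delta>>0. \<exists>m>0. \<exists>N>0. \<forall>n\<ge>N. \<exists>xs ys. chainCR X f \<delta> xs (m*n) x y \<and> chainCR X f \<delta> ys (m*n) y x)"
proof -
  have e: "\<And>\<delta> k xs ys. (chainCR X f \<delta> xs k x y \<and> chainCR X f \<delta> ys k y x) =
     (delta_chain X f \<delta> xs k \<and> delta_chain X f \<delta> ys k \<and>
        (\<forall>i\<le>k. xs i \<in> CR X f \<and> ys i \<in> CR X f) \<and>
        xs 0 = x \<and> ys k = x \<and> xs k = y \<and> ys 0 = y)"
    unfolding chainCR_def by auto
  show ?thesis by (simp only: cr_rel_def e)
qed

lemma CR_sub: "CR X f \<subseteq> X" unfolding CR_def by auto

lemma chain_mono: "delta_chain X f d c k \<Longrightarrow> d \<le> d' \<Longrightarrow> delta_chain X f d' c k"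
  unfolding delta_chain_def by force

lemma chain_append:
  assumes "delta_chain X f d c k" "delta_chain X f d e l" "c k = e 0"
  shows "delta_chain X f d (\<lambda>i. if i \<le> k then c i else e (i - k)) (k + l)"
  unfolding delta_chain_def
proof (intro conjI allI impI)
  fix i assume "i \<le> k + l"
  then show "(if i \<le> k then c i else e (i - k)) \<in> X" using assms unfolding delta_chain_def by auto
next
  fix i assume i: "i < k + l"
  show "dist (f (if i \<le> k then c i else e (i - k))) (if Suc i \<le> k then c (Suc i) else e (Suc i - k)) \<le> d"
  proof (cases "i < k")
    case True then show ?thesis using assms unfolding delta_chain_def by auto
  next
    case False
    then have "Suc i - k = Suc (i - k)" "i - k < l" using i by auto
    then show ?thesis using False assms unfolding delta_chain_def
      by (cases "i = k") auto
  qed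
qed

lemma chainCR_append:
  assumes "chainCR X f d c k a b" "chainCR X f d e l b z"
  shows "chainCR X f d (\<lambda>i. if i \<le> k then c i else e (i - k)) (k + l) a z"
proof -
  have "delta_chain X f d (\<lambda>i. if i \<le> k then c i else e (i - k)) (k + l)"
    using assms chain_append[of X f d c k e l] unfolding chainCR_def by auto
  moreover have "\<forall>i\<le>k+l. (if i \<le> k then c i else e (i - k)) \<in> CR X f"
    using assms unfolding chainCR_def by auto
  moreover have "(if k + l \<le> k then c (k+l) else e (k + l - k)) = z"
    using assms unfolding chainCR_def by auto
  ultimately show ?thesis using assms unfolding chainCR_def by auto
qed

lemma chain_suffix: "delta_chain X f d c k \<Longrightarrow> j \<le> k \<Longrightarrow> delta_chain X f d (\<lambda>i. c (j+i)) (k-j)"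
  unfolding delta_chain_def by auto

lemma chain_prefix: "delta_chain X f d c k \<Longrightarrow> j \<le> k \<Longrightarrow> delta_chain X f d c j"
  unfolding delta_chain_def by auto

lemma chain_rotate:
  assumes "delta_chain X f d c k" "c 0 = c k" "j \<le> k"
  shows "\<exists>r. delta_chain X f d r k \<and> r 0 = c j \<and> r k = c j"
proof -
  have "delta_chain X f d (\<lambda>i. if i \<le> k - j then c (j+i) else c (i - (k-j))) (k - j + j)"
    using chain_append[OF chain_suffix[OF assms(1,3)] chain_prefix[OF assms(1,3)]] assms by auto
  then show ?thesis using assms by (intro exI[of _ "\<lambda>i. if i \<le> k - j then c (j+i) else c (i - (k-j))"]) (cases "j = 0"; auto)
qed

lemma chain_perturb:
  assumes "delta_chain X f d c k" "\<forall>i\<le>k. e i \<in> X \<and> dist (c i) (e i) \<le> \<eta> \<and> dist (f (c i)) (f (e i)) \<le> \<omega>"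
  shows "delta_chain X f (\<omega> + d + \<eta>) e k"
  unfolding delta_chain_def
proof (intro conjI allI impI)
  fix i assume "i \<le> k" then show "e i \<in> X" using assms by auto
next
  fix i assume i: "i < k"
  have "dist (f (e i)) (e (Suc i)) \<le> dist (f (e i)) (f (c i)) + dist (f (c i)) (c (Suc i)) + dist (c (Suc i)) (e (Suc i))"
    by (metis add.commute add_left_mono dist_triangle order_trans)
  moreover have "dist (f (e i)) (f (c i)) \<le> \<omega>" using assms i by (simp add: dist_commute)
  moreover have "dist (f (c i)) (c (Suc i)) \<le> d" using assms i unfolding delta_chain_def by auto
  moreover have "dist (c (Suc i)) (e (Suc i)) \<le> \<eta>" using assms i by auto
  ultimately show "dist (f (e i)) (e (Suc i)) \<le> \<omega> + d + \<eta>" by linarith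
qed




context
  fixes X :: "'a::metric_space set" and f :: "'a \<Rightarrow> 'a"
  assumes cX: "compact X" and cf: "continuous_on X f" and fX: "f ` X \<subseteq> X"
begin

lemma uc: "e > 0 \<Longrightarrow> \<exists>\<eta>>0. \<forall>a\<in>X. \<forall>b\<in>X. dist a b < \<eta> \<longrightarrow> dist (f a) (f b) < e"
  using compact_uniformly_continuous[OF cf cX] unfolding uniformly_continuous_on_def by metis

lemma shift_chain:
  assumes "\<delta> > 0"
  shows "\<exists>\<delta>'>0. \<forall>c k. delta_chain X f \<delta>' c k \<and> k \<ge> 1 \<longrightarrow>
     delta_chain X f \<delta> (\<lambda>i. if i = 0 then f (c 0) else if i = k then f (c k) else c (Suc i)) k"
proof -
  obtain \<eta> where eta: "\<eta> > 0" "\<forall>a\<in>X. \<forall>b\<in>X. dist a b < \<eta> \<longrightarrow> dist (f a) (f b) < \<delta>/2"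
    using uc[of "\<delta>/2"] assms by auto
  define d' where "d' = min (\<eta>/2) (\<delta>/2)"
  have d': "d' > 0" "d' < \<eta>" "d' \<le> \<delta>/2" using eta assms unfolding d'_def by auto
  show ?thesis
  proof (intro exI[of _ d'] conjI d' allI impI)
    fix c k assume A: "delta_chain X f d' c k \<and> k \<ge> 1"
    then have cX': "\<And>i. i \<le> k \<Longrightarrow> c i \<in> X" and st: "\<And>i. i < k \<Longrightarrow> dist (f (c i)) (c (Suc i)) \<le> d'"
      and k: "k \<ge> 1"
      unfolding delta_chain_def by auto
    have fc0: "f (c 0) \<in> X" "f (c k) \<in> X" using cX' fX by auto
    show "delta_chain X f \<delta> (\<lambda>i. if i = 0 then f (c 0) else if i = k then f (c k) else c (Suc i)) k"
      unfolding delta_chain_def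
    proof (intro conjI allI impI)
      fix i assume "i \<le> k" then show "(if i = 0 then f (c 0) else if i = k then f (c k) else c (Suc i)) \<in> X"
        using fc0 cX' by auto
    next
      fix i assume i: "i < k"
      have fcl: "dist (f (f (c 0))) (f (c 1)) < \<delta>/2"
        using eta(2) fc0 cX'[of 1] st[of 0] d' k by auto
      show "dist (f (if i = 0 then f (c 0) else if i = k then f (c k) else c (Suc i)))
          (if Suc i = 0 then f (c 0) else if Suc i = k then f (c k) else c (Suc (Suc i))) \<le> \<delta>"
      proof (cases "i = 0")
        case True
        show ?thesis
        proof (cases "k = 1")
          case True then show ?thesis using fcl \<open>i = 0\<close> by (simp; smt (verit) zero_le_dist)
        next
          case False
          have "dist (f (f (c 0))) (c 2) \<le> dist (f (f (c 0))) (f (c 1)) + dist (f (c 1)) (c 2)"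
            by (rule dist_triangle)
          moreover have "dist (f (c 1)) (c 2) \<le> d'" using st[of 1] False k by (simp add: numeral_2_eq_2)
          ultimately show ?thesis using fcl d' \<open>i = 0\<close> False by (simp add: numeral_2_eq_2)
        qed
      next
        case False
        then show ?thesis using st[of "Suc i"] i d' assms by auto
      qed
    qed
  qed
qed

lemma near_CR:
  assumes "\<epsilon> > 0"
  shows "\<exists>\<gamma>>0. \<forall>c k j. delta_chain X f \<gamma> c k \<and> k \<ge> 1 \<and> c 0 = c k \<and> j \<le> k \<longrightarrow> (\<exists>p\<in>CR X f. dist (c j) p < \<epsilon>)"
proof (rule ccontr)
  assume H: "\<not> ?thesis"
  have "\<forall>n::nat. \<exists>c k j. delta_chain X f (1/Suc n) c k \<and> k \<ge> 1 \<and> c 0 = c k \<and> j \<le> k \<and> (\<forall>p\<in>CR X f. dist (c j) p \<ge> \<epsilon>)"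
  proof
    fix n :: nat
    have pos: "(1::real)/Suc n > 0" by simp
    from H have H2: "\<forall>\<gamma>>0. \<exists>c k j. delta_chain X f \<gamma> c k \<and> k \<ge> 1 \<and> c 0 = c k \<and> j \<le> k \<and> (\<forall>p\<in>CR X f. dist (c j) p \<ge> \<epsilon>)"
      by (auto simp: not_less) (meson not_le)
    show "\<exists>c k j. delta_chain X f (1/Suc n) c k \<and> k \<ge> 1 \<and> c 0 = c k \<and> j \<le> k \<and> (\<forall>p\<in>CR X f. dist (c j) p \<ge> \<epsilon>)"
      using H2 pos by blast
  qed
  then obtain C K J where CKJ: "\<And>n. delta_chain X f (1/Suc n) (C n) (K n) \<and> K n \<ge> 1 \<and> C n 0 = C n (K n) \<and> J n \<le> K n \<and> (\<forall>p\<in>CR X f. dist (C n (J n)) p \<ge> \<epsilon>)"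
    by metis
  define y where "y n = C n (J n)" for n
  have yX: "\<forall>n. y n \<in> X" using CKJ unfolding y_def delta_chain_def by auto
  obtain l r where l: "l \<in> X" "strict_mono r" "(y \<circ> r) \<longlonglongrightarrow> l"
    using compact_imp_seq_compact[OF cX] yX unfolding seq_compact_def by metis
  have lCR: "l \<in> CR X f"
    unfolding CR_def
  proof (intro CollectI conjI l allI impI)
    fix \<delta> :: real assume dpos: "\<delta> > 0"
    obtain \<eta> where eta: "\<eta> > 0" "\<forall>a\<in>X. \<forall>b\<in>X. dist a b < \<eta> \<longrightarrow> dist (f a) (f b) < \<delta>/3"
      using uc[of "\<delta>/3"] dpos by auto
    obtain N where N: "\<forall>n\<ge>N. dist ((y \<circ> r) n) l < min \<eta> (\<delta>/3)"
      using l(3) eta(1) dpos unfolding lim_sequentially by (metis min_less_iff_conj zero_less_divide_iff zero_less_numeral)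
    obtain M where M: "inverse (real (Suc M)) < \<delta>/3" using reals_Archimedean[of "\<delta>/3"] dpos by auto
    define n where "n = max N M"
    have rn: "r n \<ge> M" using seq_suble[OF l(2), of n] unfolding n_def by auto
    have "1 / real (Suc (r n)) \<le> inverse (real (Suc M))"
      using rn by (simp add: divide_inverse le_imp_inverse_le)
    hence sm: "1 / real (Suc (r n)) \<le> \<delta>/3" using M by linarith
    have dn: "dist (y (r n)) l < min \<eta> (\<delta>/3)" using N unfolding n_def by auto
    define c where "c = C (r n)"
    define k where "k = K (r n)"
    have cc: "delta_chain X f (1/Suc (r n)) c k" "k \<ge> 1" "c 0 = c k" "J (r n) \<le> k"
      using CKJ[of "r n"] unfolding c_def k_def by auto
    obtain q where q: "delta_chain X f (1/Suc (r n)) q k" "q 0 = y (r n)" "q k = y (r n)"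
      using chain_rotate[OF cc(1,3,4)] unfolding y_def c_def by auto
    define e where "e i = (if i = 0 \<or> i = k then l else q i)" for i
    have "\<forall>i\<le>k. e i \<in> X \<and> dist (q i) (e i) \<le> \<delta>/3 \<and> dist (f (q i)) (f (e i)) \<le> \<delta>/3"
    proof (intro allI impI)
      fix i assume "i \<le> k"
      then have qi: "q i \<in> X" using q(1) unfolding delta_chain_def by auto
      show "e i \<in> X \<and> dist (q i) (e i) \<le> \<delta>/3 \<and> dist (f (q i)) (f (e i)) \<le> \<delta>/3"
      proof (cases "i = 0 \<or> i = k")
        case True
        then have "q i = y (r n)" using q by auto
        then show ?thesis using True dn eta(2) qi l(1) dpos unfolding e_def
          by (smt (verit) min_less_iff_conj)
      next
        case False
        then show ?thesis using qi dpos unfolding e_def by auto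
      qed
    qed
    from chain_perturb[OF q(1) this]
    have "delta_chain X f (\<delta>/3 + 1/Suc (r n) + \<delta>/3) e k" .
    then have ec: "delta_chain X f \<delta> e k" by (rule chain_mono) (use sm in linarith)
    show "\<exists>k\<ge>1. \<exists>c. delta_chain X f \<delta> c k \<and> c 0 = l \<and> c k = l"
      using cc(2) ec by (intro exI[of _ k] conjI exI[of _ e]) (auto simp: e_def)
  qed
  obtain N where N: "\<forall>n\<ge>N. dist ((y \<circ> r) n) l < \<epsilon>"
    using l(3) assms unfolding lim_sequentially by metis
  then have "dist (y (r N)) l < \<epsilon>" by auto
  moreover have "dist (y (r N)) l \<ge> \<epsilon>" using CKJ lCR unfolding y_def by auto
  ultimately show False by linarith
qed

end



context
  fixes X :: "'a::metric_space set" and f :: "'a \<Rightarrow> 'a"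
  assumes cX: "compact X" and cf: "continuous_on X f" and fX: "f ` X \<subseteq> X"
begin

lemma CR_cycle_in_CR:
  assumes x: "x \<in> CR X f" and dpos: "\<delta> > 0"
  shows "\<exists>k\<ge>1. \<exists>c. chainCR X f \<delta> c k x x"
proof -
  obtain \<eta> where eta: "\<eta> > 0" "\<forall>a\<in>X. \<forall>b\<in>X. dist a b < \<eta> \<longrightarrow> dist (f a) (f b) < \<delta>/3"
    using uc[OF cX cf fX, of "\<delta>/3"] dpos by auto
  define \<epsilon> where "\<epsilon> = min \<eta> (\<delta>/3)"
  have epos: "\<epsilon> > 0" using eta dpos unfolding \<epsilon>_def by auto
  obtain \<gamma> where g: "\<gamma> > 0" "\<forall>c k j. delta_chain X f \<gamma> c k \<and> k \<ge> 1 \<and> c 0 = c k \<and> j \<le> k \<longrightarrow> (\<exists>p\<in>CR X f. dist (c j) p < \<epsilon>)"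
    using near_CR[OF cX cf fX epos] by auto
  have gpos: "min \<gamma> (\<delta>/3) > 0" using g dpos by auto
  obtain k c where kc: "k \<ge> 1" "delta_chain X f (min \<gamma> (\<delta>/3)) c k" "c 0 = x" "c k = x"
    using x gpos unfolding CR_def by blast
  have cg: "delta_chain X f \<gamma> c k" using kc(2) by (rule chain_mono) auto
  have "\<forall>j. \<exists>p. j \<le> k \<longrightarrow> p \<in> CR X f \<and> dist (c j) p < \<epsilon>"
    using g(2) cg kc by metis
  then obtain P where P: "\<And>j. j \<le> k \<Longrightarrow> P j \<in> CR X f \<and> dist (c j) (P j) < \<epsilon>" by metis
  define e where "e j = (if j = 0 \<or> j = k then x else P j)" for j
  have "\<forall>i\<le>k. e i \<in> X \<and> dist (c i) (e i) \<le> \<delta>/3 \<and> dist (f (c i)) (f (e i)) \<le> \<delta>/3"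
  proof (intro allI impI)
    fix i assume ik: "i \<le> k"
    then have ci: "c i \<in> X" using kc(2) unfolding delta_chain_def by auto
    show "e i \<in> X \<and> dist (c i) (e i) \<le> \<delta>/3 \<and> dist (f (c i)) (f (e i)) \<le> \<delta>/3"
    proof (cases "i = 0 \<or> i = k")
      case True
      then show ?thesis using kc x CR_sub dpos unfolding e_def by auto
    next
      case False
      have PX: "P i \<in> X" using P[OF ik] CR_sub by auto
      have "dist (c i) (P i) < \<epsilon>" using P[OF ik] by auto
      then show ?thesis using False PX ci eta(2) unfolding e_def \<epsilon>_def
        by (smt (verit) min_less_iff_conj)
    qed
  qed
  from chain_perturb[OF kc(2) this]
  have "delta_chain X f (\<delta>/3 + min \<gamma> (\<delta>/3) + \<delta>/3) e k" .
  then have ec: "delta_chain X f \<delta> e k" by (rule chain_mono) auto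
  have "\<forall>i\<le>k. e i \<in> CR X f" using P x unfolding e_def by auto
  then show ?thesis using kc(1) ec unfolding chainCR_def
    by (intro exI[of _ k] conjI exI[of _ e]) (auto simp: e_def)
qed

lemma repeat_cycle:
  assumes "chainCR X f d c k x x"
  shows "\<exists>c'. chainCR X f d c' (k*n) x x"
proof (induction n)
  case 0
  have "x \<in> CR X f" using assms unfolding chainCR_def by auto
  then have "chainCR X f d (\<lambda>_. x) 0 x x" using CR_sub unfolding chainCR_def delta_chain_def by auto
  then show ?case by auto
next
  case (Suc n)
  then obtain c' where "chainCR X f d c' (k*n) x x" by auto
  from chainCR_append[OF this assms] show ?case by (metis add.commute mult_Suc_right)
qed

lemma CR_refl:
  assumes x: "x \<in> CR X f"
  shows "cr_rel X f x x"
  unfolding cr_rel_alt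
proof (intro conjI x allI impI)
  fix \<delta> :: real assume "\<delta> > 0"
  then obtain k c where kc: "k \<ge> 1" "chainCR X f \<delta> c k x x" using CR_cycle_in_CR[OF x] by blast
  show "\<exists>m>0. \<exists>N>0. \<forall>n\<ge>N. \<exists>xs ys. chainCR X f \<delta> xs (m * n) x x \<and> chainCR X f \<delta> ys (m * n) x x"
    using repeat_cycle[OF kc(2)] kc(1) by (intro exI[of _ k] conjI exI[of _ 1]) auto
qed

lemma CR_f:
  assumes x: "x \<in> CR X f"
  shows "f x \<in> CR X f"
  unfolding CR_def
proof (intro CollectI conjI allI impI)
  show "f x \<in> X" using x CR_sub[of X f] fX by blast
  fix \<delta> :: real assume "\<delta> > 0"
  then obtain d' where d': "d' > 0" "\<forall>c k. delta_chain X f d' c k \<and> k \<ge> 1 \<longrightarrow>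
     delta_chain X f \<delta> (\<lambda>i. if i = 0 then f (c 0) else if i = k then f (c k) else c (Suc i)) k"
    using shift_chain[OF cX cf fX] by blast
  obtain k c where kc: "k \<ge> 1" "delta_chain X f d' c k" "c 0 = x" "c k = x"
    using x d'(1) unfolding CR_def by blast
  show "\<exists>k\<ge>1. \<exists>c. delta_chain X f \<delta> c k \<and> c 0 = f x \<and> c k = f x"
    using d'(2) kc by (intro exI[of _ k] conjI exI[of _ "\<lambda>i. if i = 0 then f (c 0) else if i = k then f (c k) else c (Suc i)"]) auto
qed

lemma CR_shift:
  assumes x: "cr_rel X f x y"
  shows "cr_rel X f (f x) (f y)"
proof -
  have xy: "x \<in> CR X f" "y \<in> CR X f" using x unfolding cr_rel_alt by auto
  have fxy: "f x \<in> CR X f" "f y \<in> CR X f" using CR_f xy by auto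
  show ?thesis unfolding cr_rel_alt
  proof (intro conjI fxy allI impI)
    fix \<delta> :: real assume "\<delta> > 0"
    then obtain d' where d': "d' > 0" "\<forall>c k. delta_chain X f d' c k \<and> k \<ge> 1 \<longrightarrow>
       delta_chain X f \<delta> (\<lambda>i. if i = 0 then f (c 0) else if i = k then f (c k) else c (Suc i)) k"
      using shift_chain[OF cX cf fX] by blast
    obtain m N where mN: "m > 0" "N > 0" "\<forall>n\<ge>N. \<exists>xs ys. chainCR X f d' xs (m * n) x y \<and> chainCR X f d' ys (m * n) y x"
      using x d'(1) unfolding cr_rel_alt by blast
    have sh: "chainCR X f \<delta> (\<lambda>i. if i = 0 then f (c 0) else if i = k then f (c k) else c (Suc i)) k (f a) (f b)"
      if "chainCR X f d' c k a b" "k \<ge> 1" "f a \<in> CR X f" "f b \<in> CR X f" for c k a b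
    proof -
      have "delta_chain X f \<delta> (\<lambda>i. if i = 0 then f (c 0) else if i = k then f (c k) else c (Suc i)) k"
        using d'(2) that unfolding chainCR_def by blast
      moreover have "\<forall>i\<le>k. (if i = 0 then f (c 0) else if i = k then f (c k) else c (Suc i)) \<in> CR X f"
        using that unfolding chainCR_def by auto
      ultimately show ?thesis using that unfolding chainCR_def by auto
    qed
    show "\<exists>m>0. \<exists>N>0. \<forall>n\<ge>N. \<exists>xs ys. chainCR X f \<delta> xs (m * n) (f x) (f y) \<and> chainCR X f \<delta> ys (m * n) (f y) (f x)"
    proof (rule exI[of _ m], rule conjI[OF mN(1)], rule exI[of _ N], rule conjI[OF mN(2)], intro allI impI)
      fix n assume n: "n \<ge> N"
      then obtain xs ys where c: "chainCR X f d' xs (m * n) x y" "chainCR X f d' ys (m * n) y x"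
        using mN by blast
      have mn: "m * n \<ge> 1" using mN n by (simp add: Suc_le_eq)
      show "\<exists>xs ys. chainCR X f \<delta> xs (m * n) (f x) (f y) \<and> chainCR X f \<delta> ys (m * n) (f y) (f x)"
        using sh[OF c(1) mn fxy(1,2)] sh[OF c(2) mn fxy(2,1)] by blast
    qed
  qed
qed

lemma CR_closed:
  assumes xy: "x \<in> CR X f" "y \<in> CR X f"
    and appr: "\<forall>e>0. \<exists>x' y'. cr_rel X f x' y' \<and> dist x' x < e \<and> dist y' y < e"
  shows "cr_rel X f x y"
  unfolding cr_rel_alt
proof (intro conjI xy allI impI)
  fix \<delta> :: real assume dpos: "\<delta> > 0"
  obtain \<eta> where eta: "\<eta> > 0" "\<forall>a\<in>X. \<forall>b\<in>X. dist a b < \<eta> \<longrightarrow> dist (f a) (f b) < \<delta>/3"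
    using uc[OF cX cf fX, of "\<delta>/3"] dpos by auto
  obtain x' y' where x'y': "cr_rel X f x' y'" "dist x' x < min \<eta> (\<delta>/3)" "dist y' y < min \<eta> (\<delta>/3)"
    using appr eta(1) dpos by (metis min_less_iff_conj zero_less_divide_iff zero_less_numeral)
  have XX: "x \<in> X" "y \<in> X" "x' \<in> X" "y' \<in> X" using xy x'y'(1) CR_sub unfolding cr_rel_alt by auto
  have fx: "dist x' x \<le> \<delta>/3" "dist (f x') (f x) \<le> \<delta>/3" "dist y' y \<le> \<delta>/3" "dist (f y') (f y) \<le> \<delta>/3"
    using x'y' eta(2) XX by (smt (verit) min_less_iff_conj)+
  obtain m N where mN: "m > 0" "N > 0" "\<forall>n\<ge>N. \<exists>xs ys. chainCR X f (\<delta>/3) xs (m * n) x' y' \<and> chainCR X f (\<delta>/3) ys (m * n) y' x'"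
  proof -
    have "\<delta>/3 > 0" using dpos by simp
    then show ?thesis using that x'y'(1) unfolding cr_rel_alt by blast
  qed
  have pert: "chainCR X f \<delta> (\<lambda>i. if i = 0 then b else if i = k then b' else c i) k b b'"
    if c: "chainCR X f (\<delta>/3) c k a a'" and k: "k \<ge> 1" and ab: "b \<in> CR X f" "b' \<in> CR X f"
       "dist a b \<le> \<delta>/3" "dist (f a) (f b) \<le> \<delta>/3" "dist a' b' \<le> \<delta>/3" "dist (f a') (f b') \<le> \<delta>/3"
     for c k a a' b b'
  proof -
    have "\<forall>i\<le>k. (if i = 0 then b else if i = k then b' else c i) \<in> X \<and>
       dist (c i) (if i = 0 then b else if i = k then b' else c i) \<le> \<delta>/3 \<and>
       dist (f (c i)) (f (if i = 0 then b else if i = k then b' else c i)) \<le> \<delta>/3"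
    proof (intro allI impI)
      fix i assume ik: "i \<le> k"
      have c0: "c 0 = a" "c k = a'" "delta_chain X f (\<delta>/3) c k" using c unfolding chainCR_def by auto
      have bX: "b \<in> X" "b' \<in> X" using ab CR_sub[of X f] by auto
      have ci: "c i \<in> X" using c0(3) ik unfolding delta_chain_def by auto
      show "(if i = 0 then b else if i = k then b' else c i) \<in> X \<and>
       dist (c i) (if i = 0 then b else if i = k then b' else c i) \<le> \<delta>/3 \<and>
       dist (f (c i)) (f (if i = 0 then b else if i = k then b' else c i)) \<le> \<delta>/3"
      proof (cases "i = 0")
        case True then show ?thesis using c0 bX ab by simp
      next
        case False
        show ?thesis
        proof (cases "i = k")
          case True then show ?thesis using c0 bX ab \<open>i \<noteq> 0\<close> by simp
        next
          case False then show ?thesis using ci \<open>i \<noteq> 0\<close> dpos by simp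
        qed
      qed
    qed
    from chain_perturb[OF _ this, of "\<delta>/3"] c
    have "delta_chain X f (\<delta>/3 + \<delta>/3 + \<delta>/3) (\<lambda>i. if i = 0 then b else if i = k then b' else c i) k"
      unfolding chainCR_def by auto
    then have "delta_chain X f \<delta> (\<lambda>i. if i = 0 then b else if i = k then b' else c i) k"
      by (rule chain_mono) auto
    then show ?thesis using c ab k unfolding chainCR_def by auto
  qed
  show "\<exists>m>0. \<exists>N>0. \<forall>n\<ge>N. \<exists>xs ys. chainCR X f \<delta> xs (m * n) x y \<and> chainCR X f \<delta> ys (m * n) y x"
  proof (rule exI[of _ m], rule conjI[OF mN(1)], rule exI[of _ N], rule conjI[OF mN(2)], intro allI impI)
    fix n assume n: "n \<ge> N"
    then obtain xs ys where c: "chainCR X f (\<delta>/3) xs (m * n) x' y'" "chainCR X f (\<delta>/3) ys (m * n) y' x'"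
      using mN by blast
    have mn: "m * n \<ge> 1" using mN n by (simp add: Suc_le_eq)
    have fx': "dist x x' \<le> \<delta>/3" "dist (f x) (f x') \<le> \<delta>/3" "dist y y' \<le> \<delta>/3" "dist (f y) (f y') \<le> \<delta>/3"
      using fx by (simp_all add: dist_commute)
    show "\<exists>xs ys. chainCR X f \<delta> xs (m * n) x y \<and> chainCR X f \<delta> ys (m * n) y x"
      using pert[OF c(1) mn xy(1,2) fx(1,2,3,4)] pert[OF c(2) mn xy(2,1) fx(3,4,1,2)] by blast
  qed
qed

lemma CR_trans:
  assumes "cr_rel X f x y" "cr_rel X f y z"
  shows "cr_rel X f x z"
  unfolding cr_rel_alt
proof (intro conjI allI impI)
  show "x \<in> CR X f" "z \<in> CR X f" using assms unfolding cr_rel_alt by auto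
  fix \<delta> :: real assume dpos: "\<delta> > 0"
  obtain m1 N1 where A: "m1 > 0" "N1 > 0" "\<forall>n\<ge>N1. \<exists>xs ys. chainCR X f \<delta> xs (m1 * n) x y \<and> chainCR X f \<delta> ys (m1 * n) y x"
    using assms(1) dpos unfolding cr_rel_alt by blast
  obtain m2 N2 where B: "m2 > 0" "N2 > 0" "\<forall>n\<ge>N2. \<exists>xs ys. chainCR X f \<delta> xs (m2 * n) y z \<and> chainCR X f \<delta> ys (m2 * n) z y"
    using assms(2) dpos unfolding cr_rel_alt by blast
  show "\<exists>m>0. \<exists>N>0. \<forall>n\<ge>N. \<exists>xs ys. chainCR X f \<delta> xs (m * n) x z \<and> chainCR X f \<delta> ys (m * n) z x"
  proof (rule exI[of _ "m1*m2"], rule conjI, (use A B in simp), rule exI[of _ "N1+N2"], rule conjI, (use A B in simp), intro allI impI)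
    fix n assume n: "n \<ge> N1 + N2"
    have n1: "m2 * N1 \<ge> N1" using B by simp
    obtain d where nd: "n = N1 + d" using n le_add1 le_add_diff_inverse le_trans by metis
    have dN: "d \<ge> N2" using n nd by simp
    have "d \<le> m1 * d" using A(1) by (cases m1) auto
    then have n2: "m1 * d \<ge> N2" using dN by linarith
    obtain xs1 ys1 where c1: "chainCR X f \<delta> xs1 (m1 * (m2 * N1)) x y" "chainCR X f \<delta> ys1 (m1 * (m2 * N1)) y x"
      using A(3) n1 by blast
    obtain xs2 ys2 where c2: "chainCR X f \<delta> xs2 (m2 * (m1 * d)) y z" "chainCR X f \<delta> ys2 (m2 * (m1 * d)) z y"
      using B(3) n2 by blast
    have eq1: "m1 * (m2 * N1) + m2 * (m1 * d) = m1 * m2 * n"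
      unfolding nd by (simp add: algebra_simps)
    have eq2: "m2 * (m1 * d) + m1 * (m2 * N1) = m1 * m2 * n"
      unfolding nd by (simp add: algebra_simps)
    show "\<exists>xs ys. chainCR X f \<delta> xs (m1 * m2 * n) x z \<and> chainCR X f \<delta> ys (m1 * m2 * n) z x"
      using chainCR_append[OF c1(1) c2(1)] chainCR_append[OF c2(2) c1(2)]
      unfolding eq1 eq2 by blast
  qed
qed

end


lemma cr_sym: "cr_rel X f x y \<Longrightarrow> cr_rel X f y x"
  unfolding cr_rel_alt
proof (elim conjE, intro conjI allI impI)
  fix \<delta> :: real
  assume a: "x \<in> CR X f" "y \<in> CR X f"
    "\<forall>\<delta>>0. \<exists>m>0. \<exists>N>0. \<forall>n\<ge>N. \<exists>xs ys. chainCR X f \<delta> xs (m * n) x y \<and> chainCR X f \<delta> ys (m * n) y x"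
    and d: "\<delta> > 0"
  then obtain m N where mN: "m > 0" "N > 0" "\<forall>n\<ge>N. \<exists>xs ys. chainCR X f \<delta> xs (m * n) x y \<and> chainCR X f \<delta> ys (m * n) y x"
    by blast
  have "\<forall>n\<ge>N. \<exists>xs ys. chainCR X f \<delta> xs (m * n) y x \<and> chainCR X f \<delta> ys (m * n) x y"
  proof (intro allI impI)
    fix n assume "n \<ge> N"
    then obtain xs ys where "chainCR X f \<delta> xs (m * n) x y" "chainCR X f \<delta> ys (m * n) y x" using mN by blast
    then show "\<exists>xs ys. chainCR X f \<delta> xs (m * n) y x \<and> chainCR X f \<delta> ys (m * n) x y" by blast
  qed
  then show "\<exists>m>0. \<exists>N>0. \<forall>n\<ge>N. \<exists>xs ys. chainCR X f \<delta> xs (m * n) y x \<and> chainCR X f \<delta> ys (m * n) x y"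
    using mN(1,2) by blast
qed auto

theorem lemma3p1:
  fixes X :: "'a::metric_space set" and f :: "'a \<Rightarrow> 'a"
  assumes "compact X" and "continuous_on X f" and "f ` X \<subseteq> X"
  shows "equiv (CR X f) {(x, y). cr_rel X f x y}
     \<and> closedin (top_of_set (CR X f \<times> CR X f)) {(x, y). cr_rel X f x y}
     \<and> (\<lambda>(x, y). (f x, f y)) ` {(x, y). cr_rel X f x y} \<subseteq> {(x, y). cr_rel X f x y}"
proof -
  let ?R = "{(x, y). cr_rel X f x y}"
  have sub: "?R \<subseteq> CR X f \<times> CR X f" unfolding cr_rel_def by auto
  have eq: "equiv (CR X f) ?R"
  proof (rule equivI[OF sub])
    show "refl_on (CR X f) ?R" by (rule refl_onI) (simp add: CR_refl[OF assms])
    show "sym ?R" by (rule symI) (simp add: cr_sym)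
    show "trans ?R" by (rule transI) (auto intro: CR_trans[OF assms])
  qed
  have cl: "closedin (top_of_set (CR X f \<times> CR X f)) ?R"
    unfolding closedin_limpt
  proof (intro conjI sub allI impI)
    fix p assume p: "p islimpt ?R \<and> p \<in> CR X f \<times> CR X f"
    obtain x y where pxy: "p = (x, y)" by force
    have "\<forall>e>0. \<exists>x' y'. cr_rel X f x' y' \<and> dist x' x < e \<and> dist y' y < e"
    proof (intro allI impI)
      fix e :: real assume "e > 0"
      then obtain q where q: "q \<in> ?R" "dist q p < e" using p unfolding islimpt_approachable by blast
      obtain x' y' where qxy: "q = (x', y')" by force
      have "dist x' x < e" "dist y' y < e"
        using dist_fst_le[of q p] dist_snd_le[of q p] q(2) unfolding pxy qxy by auto
      then show "\<exists>x' y'. cr_rel X f x' y' \<and> dist x' x < e \<and> dist y' y < e"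
        using q(1) qxy by blast
    qed
    then show "p \<in> ?R" using CR_closed[OF assms] p pxy by auto
  qed
  have inv: "(\<lambda>(x, y). (f x, f y)) ` ?R \<subseteq> ?R" using CR_shift[OF assms] by auto
  show ?thesis using eq cl inv by blast
qed

end
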